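(* Under the hypotheses of the sequential gradient descent setting (see context), $\sum_{k=1}^\infty\gamma_k^2\|\nabla J_k(x_k)\|^2<\infty$.
   Context: $Q\in\mathbb{R}^{n\times n}$ symmetric positive semidefinite, $q\in\mathbb{R}^n$, $A\in\mathbb{R}^{n\times n}$ symmetric positive definite, $v\in\mathbb{R}^n$. $f(x)=\tfrac12 x^\top Qx+q^\top x$, $g(x)=(x-v)^\top A(x-v)$, $\mathcal{C}=\{x:g(x)\le1\}$, $\partial\mathcal{C}=\{x:g(x)=1\}$, $J_k(x)=f(x)+\frac{m}{k}g(x)^k$, $L_k=\bar\sigma(Q+m(4k-2)A)$, $r=\sqrt{\underline\sigma(A)}/\bar\sigma(A)$ ($\bar\sigma,\underline\sigma$ largest/smallest singular value). Setting: $m>0$ satisfies Requirement 2, namely with $w(x)=\nabla f(x)+m\nabla g(x)$, $\|w(x)\|^2\|\nabla g(x)\|\le 2rL_1\langle w(x),\nabla g(x)\rangle$ for all $x\in\partial\mathcal{C}$; $x_1\in\mathcal{C}$; $x_{k+1}=x_k-\gamma_k\nabla J_k(x_k)$ with $0<\gamma_k\le1/L_k$, $\sum_k\gamma_k^2<\infty$, $\sum_k\gamma_k=\infty$. *)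

theory Defs
  imports "HOL-Analysis.Analysis"
begin

definition grad :: "('a::euclidean_space \<Rightarrow> real) \<Rightarrow> 'a \<Rightarrow> 'a" where
  "grad F x = (THE d. (F has_derivative (\<lambda>h. d \<bullet> h)) (at x))"

definition sv_max :: "real^'n^'n \<Rightarrow> real" where
  "sv_max M = onorm (\<lambda>x. M *v x)"

definition sv_min :: "real^'n^'n \<Rightarrow> real" where
  "sv_min M = Inf {norm (M *v x) | x. norm x = 1}"

definition fobj :: "real^'n^'n \<Rightarrow> real^'n \<Rightarrow> real^'n \<Rightarrow> real" where
  "fobj Q q x = (1/2) * (x \<bullet> (Q *v x)) + q \<bullet> x"

definition gcon :: "real^'n^'n \<Rightarrow> real^'n \<Rightarrow> real^'n \<Rightarrow> real" where
  "gcon A v x = (x - v) \<bullet> (A *v (x - v))"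

definition Jpen :: "real^'n^'n \<Rightarrow> real^'n \<Rightarrow> real^'n^'n \<Rightarrow> real^'n \<Rightarrow> real \<Rightarrow> nat \<Rightarrow> real^'n \<Rightarrow> real" where
  "Jpen Q q A v m k x = fobj Q q x + (m / real k) * (gcon A v x) ^ k"

definition Lconst :: "real^'n^'n \<Rightarrow> real^'n^'n \<Rightarrow> real \<Rightarrow> nat \<Rightarrow> real" where
  "Lconst Q A m k = sv_max (Q + (m * (4 * real k - 2)) *\<^sub>R A)"

definition rconst :: "real^'n^'n \<Rightarrow> real" where
  "rconst A = sqrt (sv_min A) / sv_max A"

end

theory Submission imports Defs "HOL-Homology.Invariance_of_Domain" begin

lemma sym_dot:
  fixes M :: "real^'n^'n"
  assumes "transpose M = M"
  shows "x \<bullet> (M *v y) = y \<bullet> (M *v x)"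
  by (metis assms dot_lmul_matrix vector_transpose_matrix inner_commute)

lemma comb_mv:
  fixes Q A :: "real^'n^'n"
  shows "(Q + c *\<^sub>R A) *v x = Q *v x + c *\<^sub>R (A *v x)"
proof -
  have "(c *\<^sub>R A) *v x = A *v (c *\<^sub>R x)" by (rule matrix_scaleR_vector_ac[symmetric])
  also have "\<dots> = c *\<^sub>R (A *v x)" by (rule matrix_vector_mult_scaleR)
  finally show ?thesis by (simp add: matrix_vector_mult_add_rdistrib)
qed

lemma mv_norm: "norm (M *v x) \<le> sv_max M * norm x"
  unfolding sv_max_def by (rule onorm[OF matrix_vector_mul_bounded_linear])

lemma sv_max_nonneg: "0 \<le> sv_max M"
  unfolding sv_max_def by (rule onorm_pos_le[OF matrix_vector_mul_bounded_linear])

lemma ray: "x \<bullet> (M *v x) \<le> sv_max M * (norm x)^2"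
proof -
  have "x \<bullet> (M *v x) \<le> norm x * norm (M *v x)" by (rule norm_cauchy_schwarz)
  also have "\<dots> \<le> norm x * (sv_max M * norm x)" by (simp add: mult_left_mono mv_norm)
  finally show ?thesis by (simp add: power2_eq_square mult_ac)
qed

lemma psd_cs:
  fixes M :: "real^'n^'n"
  assumes symM: "\<And>x y. x \<bullet> (M *v y) = y \<bullet> (M *v x)"
    and psd: "\<And>y. 0 \<le> y \<bullet> (M *v y)"
  shows "(y \<bullet> (M *v x))^2 \<le> (y \<bullet> (M *v y)) * (x \<bullet> (M *v x))"
proof -
  define a where "a = y \<bullet> (M *v y)"
  define b where "b = y \<bullet> (M *v x)"
  define c where "c = x \<bullet> (M *v x)"
  have quad: "0 \<le> c + 2*t*b + t^2*a" for t
  proof -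
    have "0 \<le> (x + t *\<^sub>R y) \<bullet> (M *v (x + t *\<^sub>R y))" by (rule psd)
    also have "\<dots> = c + t * (x \<bullet> (M *v y)) + t * b + t^2 * a"
      by (simp add: a_def b_def c_def matrix_vector_right_distrib matrix_vector_mult_scaleR
          inner_add_left inner_add_right power2_eq_square algebra_simps)
    also have "x \<bullet> (M *v y) = b" using symM b_def by simp
    finally show ?thesis by (simp only: mult.commute mult.left_commute add.commute add.left_commute)
  qed
  have a0: "0 \<le> a" using psd a_def by simp
  show ?thesis
  proof (cases "a = 0")
    case True
    have "b = 0"
    proof (rule ccontr)
      assume "b \<noteq> 0"
      have "0 \<le> c + 2*(-(c+1)/(2*b))*b + (-(c+1)/(2*b))^2*a" by (rule quad)
      with \<open>b \<noteq> 0\<close> True show False by (simp add: field_simps)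
    qed
    then show ?thesis using True a_def b_def c_def by simp
  next
    case False
    with a0 have ap: "a > 0" by simp
    have "0 \<le> c + 2*(-b/a)*b + (-b/a)^2*a" by (rule quad)
    hence "0 \<le> c - b^2/a" using ap by (simp add: field_simps power2_eq_square)
    hence "b^2 \<le> a * c" using ap by (simp add: field_simps)
    then show ?thesis by (simp add: a_def b_def c_def)
  qed
qed


lemma sv_max_mono:
  fixes M M' :: "real^'n^'n"
  assumes symM: "\<And>x y. x \<bullet> (M *v y) = y \<bullet> (M *v x)"
    and psd: "\<And>y. 0 \<le> y \<bullet> (M *v y)"
    and le: "\<And>y. y \<bullet> (M *v y) \<le> y \<bullet> (M' *v y)"
  shows "sv_max M \<le> sv_max M'"
proof -
  define L where "L = sv_max M'"
  have L0: "0 \<le> L" using sv_max_nonneg L_def by simp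
  have "norm (M *v x) \<le> L * norm x" for x
  proof -
    define y where "y = M *v x"
    have e: "(norm y)^2 = y \<bullet> (M *v x)" by (simp add: y_def power2_norm_eq_inner)
    have "((norm y)^2)^2 \<le> (y \<bullet> (M *v y)) * (x \<bullet> (M *v x))"
      using psd_cs[OF symM psd] e by metis
    also have "\<dots> \<le> (L * (norm y)^2) * (L * (norm x)^2)"
    proof (rule mult_mono)
      show "y \<bullet> (M *v y) \<le> L * (norm y)^2" using le[of y] ray[of y M'] unfolding L_def by linarith
      show "x \<bullet> (M *v x) \<le> L * (norm x)^2" using le[of x] ray[of x M'] unfolding L_def by linarith
      show "0 \<le> L * (norm y)^2" using L0 by simp
      show "0 \<le> x \<bullet> (M *v x)" by (rule psd)
    qed
    finally have h: "((norm y)^2)^2 \<le> (L * norm x)^2 * (norm y)^2" by (simp add: power2_eq_square mult_ac)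
    show ?thesis
    proof (cases "norm y = 0")
      case True then show ?thesis using L0 y_def by simp
    next
      case False
      then have "(norm y)^2 \<le> (L * norm x)^2" using h by (simp add: power2_eq_square)
      moreover have "0 \<le> L * norm x" using L0 by simp
      ultimately have "norm y \<le> L * norm x" by (rule power2_le_imp_le)
      then show ?thesis by (simp add: y_def)
    qed
  qed
  then have "onorm (\<lambda>x. M *v x) \<le> L" by (rule onorm_le)
  then show ?thesis unfolding sv_max_def L_def .
qed


lemma grad_eqI:
  fixes F :: "'a::euclidean_space \<Rightarrow> real"
  assumes "(F has_derivative (\<lambda>h. d \<bullet> h)) (at x)"
  shows "grad F x = d"
  unfolding grad_def
proof (rule the_equality)
  show "(F has_derivative (\<lambda>h. d \<bullet> h)) (at x)" by (rule assms)
next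
  fix d' assume "(F has_derivative (\<lambda>h. d' \<bullet> h)) (at x)"
  then have "(\<lambda>h. d' \<bullet> h) = (\<lambda>h. d \<bullet> h)" using has_derivative_unique assms by blast
  then have "d' \<bullet> (d' - d) = d \<bullet> (d' - d)" by metis
  then have "(d' - d) \<bullet> (d' - d) = 0" by (simp add: inner_diff_left)
  then show "d' = d" by simp
qed

lemma quad_deriv:
  fixes M :: "real^'n^'n"
  assumes "transpose M = M"
  shows "((\<lambda>y. (y - v) \<bullet> (M *v (y - v))) has_derivative (\<lambda>h. (2 *\<^sub>R (M *v (x - v))) \<bullet> h)) (at x)"
proof -
  have d1: "((\<lambda>y. y - v) has_derivative (\<lambda>h. h)) (at x)"
    using has_derivative_diff[OF has_derivative_ident has_derivative_const[of v]] by simp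
  have d2: "((\<lambda>y. M *v (y - v)) has_derivative (\<lambda>h. M *v h)) (at x)"
    using bounded_linear.has_derivative[OF matrix_vector_mul_bounded_linear[of M] d1] by simp
  have d3: "((\<lambda>y. (y - v) \<bullet> (M *v (y - v))) has_derivative
      (\<lambda>h. (x - v) \<bullet> (M *v h) + h \<bullet> (M *v (x - v)))) (at x)"
    using has_derivative_inner[OF d1 d2] by simp
  have p: "(x - v) \<bullet> (M *v h) + h \<bullet> (M *v (x - v)) = (2 *\<^sub>R (M *v (x - v))) \<bullet> h" for h
  proof -
    have "(x - v) \<bullet> (M *v h) = h \<bullet> (M *v (x - v))" by (rule sym_dot[OF assms])
    moreover have "(2 *\<^sub>R (M *v (x - v))) \<bullet> h = 2 * (h \<bullet> (M *v (x - v)))" by (simp add: inner_commute)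
    ultimately show ?thesis by simp
  qed
  have e: "(\<lambda>h. (x - v) \<bullet> (M *v h) + h \<bullet> (M *v (x - v))) = (\<lambda>h. (2 *\<^sub>R (M *v (x - v))) \<bullet> h)"
    using p by (simp add: fun_eq_iff)
  show ?thesis using d3 unfolding e .
qed

lemma gcon_deriv:
  assumes "transpose A = A"
  shows "(gcon A v has_derivative (\<lambda>h. (2 *\<^sub>R (A *v (x - v))) \<bullet> h)) (at x)"
proof -
  have "gcon A v = (\<lambda>y. (y - v) \<bullet> (A *v (y - v)))" by (simp add: fun_eq_iff gcon_def)
  then show ?thesis using quad_deriv[OF assms] by simp
qed

lemma fobj_deriv:
  assumes "transpose Q = Q"
  shows "(fobj Q q has_derivative (\<lambda>h. (Q *v x + q) \<bullet> h)) (at x)"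
proof -
  have d1: "((\<lambda>y. (y - 0) \<bullet> (Q *v (y - 0))) has_derivative (\<lambda>h. (2 *\<^sub>R (Q *v (x - 0))) \<bullet> h)) (at x)"
    by (rule quad_deriv[OF assms])
  have d2: "((\<lambda>y. (1/2) * ((y - 0) \<bullet> (Q *v (y - 0)))) has_derivative (\<lambda>h. (1/2) * ((2 *\<^sub>R (Q *v (x - 0))) \<bullet> h))) (at x)"
    by (rule has_derivative_mult_right[OF d1])
  have d3: "((\<lambda>y. q \<bullet> y) has_derivative (\<lambda>h. q \<bullet> h)) (at x)"
    by (rule has_derivative_inner_right[OF has_derivative_ident])
  have d4: "((\<lambda>y. (1/2) * ((y - 0) \<bullet> (Q *v (y - 0))) + q \<bullet> y) has_derivative
     (\<lambda>h. (1/2) * ((2 *\<^sub>R (Q *v (x - 0))) \<bullet> h) + q \<bullet> h)) (at x)"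
    by (rule has_derivative_add[OF d2 d3])
  have e1: "fobj Q q = (\<lambda>y. (1/2) * ((y - 0) \<bullet> (Q *v (y - 0))) + q \<bullet> y)"
    by (simp add: fun_eq_iff fobj_def)
  have e2: "(\<lambda>h. (1/2) * ((2 *\<^sub>R (Q *v (x - 0))) \<bullet> h) + q \<bullet> h) = (\<lambda>h. (Q *v x + q) \<bullet> h)"
    by (simp add: fun_eq_iff inner_add_left)
  show ?thesis using d4 unfolding e1 e2 .
qed

lemma grad_f: "transpose Q = Q \<Longrightarrow> grad (fobj Q q) x = Q *v x + q"
  by (rule grad_eqI[OF fobj_deriv])

lemma grad_g: "transpose A = A \<Longrightarrow> grad (gcon A v) x = 2 *\<^sub>R (A *v (x - v))"
  by (rule grad_eqI[OF gcon_deriv])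

lemma grad_J:
  assumes Q: "transpose Q = Q" and A: "transpose A = A" and k: "k \<ge> 1"
  shows "grad (Jpen Q q A v m k) x = Q *v x + q + (m * gcon A v x ^ (k-1)) *\<^sub>R (2 *\<^sub>R (A *v (x - v)))"
proof (rule grad_eqI)
  have d1: "((\<lambda>y. gcon A v y ^ k) has_derivative
      (\<lambda>h. of_nat k * ((2 *\<^sub>R (A *v (x - v))) \<bullet> h) * gcon A v x ^ (k - 1))) (at x)"
    by (rule has_derivative_power[OF gcon_deriv[OF A]])
  have d2: "((\<lambda>y. (m / real k) * gcon A v y ^ k) has_derivative
      (\<lambda>h. (m / real k) * (of_nat k * ((2 *\<^sub>R (A *v (x - v))) \<bullet> h) * gcon A v x ^ (k - 1)))) (at x)"
    by (rule has_derivative_mult_right[OF d1])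
  have d3: "((\<lambda>y. fobj Q q y + (m / real k) * gcon A v y ^ k) has_derivative
      (\<lambda>h. (Q *v x + q) \<bullet> h + (m / real k) * (of_nat k * ((2 *\<^sub>R (A *v (x - v))) \<bullet> h) * gcon A v x ^ (k - 1)))) (at x)"
    by (rule has_derivative_add[OF fobj_deriv[OF Q] d2])
  have e1: "Jpen Q q A v m k = (\<lambda>y. fobj Q q y + (m / real k) * gcon A v y ^ k)"
    by (simp add: fun_eq_iff Jpen_def)
  have e2: "(\<lambda>h. (Q *v x + q) \<bullet> h + (m / real k) * (of_nat k * ((2 *\<^sub>R (A *v (x - v))) \<bullet> h) * gcon A v x ^ (k - 1)))
      = (\<lambda>h. (Q *v x + q + (m * gcon A v x ^ (k-1)) *\<^sub>R (2 *\<^sub>R (A *v (x - v)))) \<bullet> h)"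
    using k by (simp add: fun_eq_iff inner_add_left field_simps)
  show "(Jpen Q q A v m k has_derivative (\<lambda>h. (Q *v x + q + (m * gcon A v x ^ (k-1)) *\<^sub>R (2 *\<^sub>R (A *v (x - v)))) \<bullet> h)) (at x)"
    using d3 unfolding e1 e2 .
qed


lemma pow_diff_abs:
  fixes a b :: real
  assumes "0 \<le> a" "a \<le> 1" "0 \<le> b" "b \<le> 1"
  shows "\<bar>a^n - b^n\<bar> \<le> real n * \<bar>a - b\<bar>"
proof (induction n)
  case 0 then show ?case by simp
next
  case (Suc n)
  have e: "a^Suc n - b^Suc n = a * (a^n - b^n) + b^n * (a - b)" by (simp add: algebra_simps)
  have "\<bar>a * (a^n - b^n)\<bar> \<le> \<bar>a^n - b^n\<bar>"
    using assms by (simp add: abs_mult mult_left_le_one_le)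
  moreover have "\<bar>b^n * (a - b)\<bar> \<le> \<bar>a - b\<bar>"
    using assms by (simp add: abs_mult power_le_one mult_left_le_one_le mult_right_le_one_le)
  ultimately have "\<bar>a^Suc n - b^Suc n\<bar> \<le> \<bar>a^n - b^n\<bar> + \<bar>a - b\<bar>"
    unfolding e by (meson abs_triangle_ineq add_mono order_trans)
  then show ?case using Suc.IH by (simp add: algebra_simps)
qed

lemma pow_diff_mul:
  fixes a b :: real
  assumes "0 \<le> a" "a \<le> 1" "0 \<le> b" "b \<le> 1"
  shows "(a^n - b^n) * (a - b) \<le> real n * (a - b)^2"
proof -
  have "(a^n - b^n) * (a - b) \<le> \<bar>a^n - b^n\<bar> * \<bar>a - b\<bar>"
    by (metis abs_ge_self abs_mult)
  also have "\<dots> \<le> (real n * \<bar>a - b\<bar>) * \<bar>a - b\<bar>"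
    by (rule mult_right_mono[OF pow_diff_abs[OF assms]]) simp
  also have "\<dots> = real n * (a - b)^2" by (simp add: power2_eq_square abs_mult_self_eq)
  finally show ?thesis .
qed

lemma scalar_key:
  fixes a b t :: real
  assumes a: "0 \<le> a" "a \<le> 1" and b: "0 \<le> b" "b \<le> 1" and t: "t \<le> a * b" and k: "k \<ge> 1"
  shows "(a^2)^(k-1) * (a^2 - t) - (b^2)^(k-1) * (t - b^2) \<le> (2 * real k - 1) * (a^2 - 2*t + b^2)"
proof -
  define al where "al = (a^2)^(k-1)"
  define be where "be = (b^2)^(k-1)"
  define n where "n = 2 * real k - 1"
  have al1: "al \<le> 1" "0 \<le> al" using a by (auto simp: al_def power_le_one)
  have be1: "be \<le> 1" "0 \<le> be" using b by (auto simp: be_def power_le_one)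
  have n1: "n \<ge> 1" using k by (simp add: n_def)
  have kk: "2 * k - 1 = 2 * (k - 1) + 1" using k by simp
  have ea: "a * al = a^(2*k-1)" unfolding al_def kk by (simp add: power_mult power_add mult.commute)
  have eb: "b * be = b^(2*k-1)" unfolding be_def kk by (simp add: power_mult power_add mult.commute)
  have rn: "real (2*k-1) = n" using k by (simp add: n_def of_nat_diff)
  have pk: "(a * al - b * be) * (a - b) \<le> n * (a - b)^2"
    unfolding ea eb using pow_diff_mul[OF a b, of "2*k-1"] rn by simp
  have c0: "0 \<le> 2*n - al - be" using n1 al1 be1 by simp
  have tt: "t * (2*n - al - be) \<le> a * b * (2*n - al - be)" by (rule mult_right_mono[OF t c0])
  have id: "n * (a^2 + b^2) - al * a^2 - be * b^2 - a * b * (2*n - al - be)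
      = n * (a - b)^2 - (a * al - b * be) * (a - b)"
    by (simp add: power2_eq_square algebra_simps)
  have "al * (a^2 - t) - be * (t - b^2) \<le> n * (a^2 - 2*t + b^2)"
  proof -
    have "0 \<le> n * (a^2 + b^2) - al * a^2 - be * b^2 - a * b * (2*n - al - be)"
      using id pk by simp
    then have "0 \<le> n * (a^2 + b^2) - al * a^2 - be * b^2 - t * (2*n - al - be)"
      using tt by linarith
    then show ?thesis by (simp add: algebra_simps)
  qed
  then show ?thesis by (simp add: al_def be_def n_def)
qed


lemma psd_of_pd:
  fixes A :: "real^'n^'n"
  assumes "\<forall>y. y \<noteq> 0 \<longrightarrow> 0 < y \<bullet> (A *v y)"
  shows "0 \<le> y \<bullet> (A *v y)"
  using assms by (cases "y = 0") (auto intro: less_imp_le)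

lemma gcon_nonneg:
  assumes "\<forall>y. y \<noteq> 0 \<longrightarrow> 0 < y \<bullet> (A *v y)"
  shows "0 \<le> gcon A v x"
  unfolding gcon_def by (rule psd_of_pd[OF assms])

lemma quad_scale:
  fixes A :: "real^'n^'n"
  shows "(t *\<^sub>R y) \<bullet> (A *v (t *\<^sub>R y)) = t^2 * (y \<bullet> (A *v y))"
  by (simp add: matrix_vector_mult_scaleR power2_eq_square)

lemma pd_lower:
  fixes A :: "real^'n^'n"
  assumes pd: "\<forall>y. y \<noteq> 0 \<longrightarrow> 0 < y \<bullet> (A *v y)"
  shows "\<exists>c0>0. \<forall>y. c0 * (norm y)^2 \<le> y \<bullet> (A *v y)"
proof -
  define S :: "(real^'n) set" where "S = sphere 0 1"
  have cS: "compact S" by (simp add: S_def)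
  have neS: "S \<noteq> {}" using norm_axis_1 unfolding S_def by (metis dist_0_norm mem_sphere empty_iff)
  have cont: "continuous_on S (\<lambda>y. y \<bullet> (A *v y))"
    by (intro continuous_on_inner continuous_on_id linear_continuous_on matrix_vector_mul_bounded_linear)
  obtain y0 where y0: "y0 \<in> S" "\<And>y. y \<in> S \<Longrightarrow> y0 \<bullet> (A *v y0) \<le> y \<bullet> (A *v y)"
    using continuous_attains_inf[OF cS neS cont] by blast
  have "y0 \<noteq> 0" using y0(1) by (auto simp: S_def)
  then have c0: "0 < y0 \<bullet> (A *v y0)" using pd by blast
  have "y0 \<bullet> (A *v y0) * (norm y)^2 \<le> y \<bullet> (A *v y)" for y
  proof (cases "y = 0")
    case True then show ?thesis by simp
  next
    case False
    define z where "z = (1 / norm y) *\<^sub>R y"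
    have "z \<in> S" using False by (simp add: S_def z_def)
    then have "y0 \<bullet> (A *v y0) \<le> z \<bullet> (A *v z)" by (rule y0(2))
    also have "z \<bullet> (A *v z) = (1/norm y)^2 * (y \<bullet> (A *v y))" unfolding z_def by (rule quad_scale)
    finally have "y0 \<bullet> (A *v y0) \<le> (1/norm y)^2 * (y \<bullet> (A *v y))" .
    then have "y0 \<bullet> (A *v y0) * (norm y)^2 \<le> (1/norm y)^2 * (y \<bullet> (A *v y)) * (norm y)^2"
      by (rule mult_right_mono) simp
    also have "\<dots> = y \<bullet> (A *v y)" using False by (simp add: power2_eq_square field_simps)
    finally show ?thesis .
  qed
  then show ?thesis using c0 by blast
qed

lemma sv_min_facts:
  fixes A :: "real^'n^'n"
  shows "0 \<le> sv_min A" and "sv_min A * norm u \<le> norm (A *v u)"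
proof -
  define S where "S = {norm (A *v x) | x. norm x = 1}"
  have ne: "S \<noteq> {}" using norm_axis_1 unfolding S_def by blast
  have bdd: "bdd_below S" unfolding S_def by (rule bdd_belowI[of _ 0]) auto
  show "0 \<le> sv_min A" unfolding sv_min_def S_def[symmetric]
    by (rule cInf_greatest[OF ne]) (auto simp: S_def)
  show "sv_min A * norm u \<le> norm (A *v u)"
  proof (cases "u = 0")
    case True then show ?thesis by simp
  next
    case False
    define z where "z = (1 / norm u) *\<^sub>R u"
    have "norm z = 1" using False by (simp add: z_def)
    then have "norm (A *v z) \<in> S" unfolding S_def by blast
    then have "sv_min A \<le> norm (A *v z)" unfolding sv_min_def S_def[symmetric] by (rule cInf_lower[OF _ bdd])
    also have "norm (A *v z) = norm (A *v u) / norm u"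
      by (simp add: z_def matrix_vector_mult_scaleR divide_inverse mult.commute)
    finally show ?thesis using False by (simp add: field_simps)
  qed
qed

lemma boundary_step:
  fixes A :: "real^'n^'n" and w z v :: "real^'n"
  assumes A_sym: "transpose A = A"
    and gz: "gcon A v z = 1"
    and req: "(norm w)^2 * norm (2 *\<^sub>R (A *v (z - v))) \<le> 2 * rconst A * L1 * (w \<bullet> (2 *\<^sub>R (A *v (z - v))))"
    and L1: "0 \<le> L1" and gam: "0 \<le> \<gamma>" "\<gamma> * L1 \<le> 1"
  shows "gcon A v (z - \<gamma> *\<^sub>R w) \<le> 1"
proof -
  define u where "u = z - v"
  define n where "n = 2 *\<^sub>R (A *v u)"
  define sm where "sm = sv_min A"
  define sM where "sM = sv_max A"
  have uAu: "u \<bullet> (A *v u) = 1" using gz by (simp add: gcon_def u_def)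
  have sm0: "0 \<le> sm" using sv_min_facts(1) sm_def by simp
  have sM0: "0 \<le> sM" using sv_max_nonneg sM_def by simp
  have Au0: "A *v u \<noteq> 0" using uAu by auto
  have nN: "norm n = 2 * norm (A *v u)" by (simp add: n_def)
  have npos: "0 < norm n" using Au0 nN by simp
  have "sm * norm u \<le> norm (A *v u)" using sv_min_facts(2) sm_def by simp
  have one_le: "1 \<le> norm u * norm (A *v u)" using uAu norm_cauchy_schwarz[of u "A *v u"] by simp
  have "sm \<le> (norm (A *v u))^2"
  proof -
    have "sm = sm * 1" by simp
    also have "\<dots> \<le> sm * (norm u * norm (A *v u))" by (rule mult_left_mono[OF one_le sm0])
    also have "\<dots> = (sm * norm u) * norm (A *v u)" by simp
    also have "\<dots> \<le> norm (A *v u) * norm (A *v u)"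
      using \<open>sm * norm u \<le> norm (A *v u)\<close> by (rule mult_right_mono) simp
    finally show ?thesis by (simp add: power2_eq_square)
  qed
  then have sqsm: "sqrt sm \<le> norm (A *v u)" using real_sqrt_le_mono by fastforce
  have req': "(norm w)^2 * norm n \<le> 2 * rconst A * L1 * (w \<bullet> n)"
    using req by (simp add: n_def u_def)
  have r0: "0 \<le> rconst A" unfolding rconst_def using sm0 sM0 sm_def sM_def by simp
  have claim: "\<gamma> * sM * (norm w)^2 \<le> w \<bullet> n"
  proof (cases "w = 0")
    case True then show ?thesis by simp
  next
    case False
    have wpos: "0 < (norm w)^2 * norm n" using False npos by simp
    have wn: "0 < w \<bullet> n"
    proof (rule ccontr)
      assume "\<not> 0 < w \<bullet> n"
      then have "2 * rconst A * L1 * (w \<bullet> n) \<le> 0"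
        using r0 L1 by (simp add: mult_nonneg_nonpos)
      then show False using req' wpos by linarith
    qed
    show ?thesis
    proof (cases "sM = 0")
      case True then show ?thesis using wn by simp
    next
      case False
      then have sMp: "0 < sM" using sM0 by simp
      have rs: "rconst A * sM = sqrt sm" unfolding rconst_def sm_def[symmetric] sM_def[symmetric]
        using sMp by simp
      have "\<gamma> * sM * ((norm w)^2 * norm n) \<le> \<gamma> * sM * (2 * rconst A * L1 * (w \<bullet> n))"
        using req' gam sM0 by (simp add: mult_left_mono)
      also have "\<dots> = 2 * (\<gamma> * L1) * sqrt sm * (w \<bullet> n)" using rs by (simp add: algebra_simps)
      also have "\<dots> \<le> 2 * 1 * sqrt sm * (w \<bullet> n)"
        using gam wn sm0 by (intro mult_right_mono mult_left_mono) auto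
      also have "\<dots> \<le> norm n * (w \<bullet> n)"
        using sqsm nN wn by (intro mult_right_mono) auto
      finally have "(\<gamma> * sM * (norm w)^2) * norm n \<le> (w \<bullet> n) * norm n" by (simp add: algebra_simps)
      then show ?thesis using npos by simp
    qed
  qed
  have wAw: "w \<bullet> (A *v w) \<le> sM * (norm w)^2" using ray sM_def by simp
  have exp: "gcon A v (z - \<gamma> *\<^sub>R w) = 1 - \<gamma> * (w \<bullet> n) + \<gamma>^2 * (w \<bullet> (A *v w))"
  proof -
    have ee: "z - \<gamma> *\<^sub>R w - v = u - \<gamma> *\<^sub>R w" by (simp add: u_def algebra_simps)
    have "gcon A v (z - \<gamma> *\<^sub>R w) = (u - \<gamma> *\<^sub>R w) \<bullet> (A *v (u - \<gamma> *\<^sub>R w))"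
      unfolding gcon_def by (simp only: ee)
    also have "\<dots> = u \<bullet> (A *v u) - \<gamma> * (u \<bullet> (A *v w)) - \<gamma> * (w \<bullet> (A *v u)) + \<gamma>^2 * (w \<bullet> (A *v w))"
      by (simp add: matrix_vector_mult_diff_distrib matrix_vector_mult_scaleR inner_diff_left
          inner_diff_right power2_eq_square algebra_simps)
    also have "u \<bullet> (A *v w) = w \<bullet> (A *v u)" by (rule sym_dot[OF A_sym])
    finally show ?thesis using uAu by (simp add: n_def algebra_simps)
  qed
  have "\<gamma>^2 * (w \<bullet> (A *v w)) \<le> \<gamma> * (\<gamma> * sM * (norm w)^2)"
    using wAw gam by (simp add: power2_eq_square mult_left_mono mult.assoc)
  also have "\<dots> \<le> \<gamma> * (w \<bullet> n)" using claim gam by (simp add: mult_left_mono)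
  finally show ?thesis using exp by simp
qed


lemma mono_grad:
  fixes Q A :: "real^'n^'n" and x x' q v :: "real^'n"
  assumes Q_sym: "transpose Q = Q" and A_sym: "transpose A = A"
    and Q_psd: "\<forall>y. 0 \<le> y \<bullet> (Q *v y)"
    and A_pd: "\<forall>y. y \<noteq> 0 \<longrightarrow> 0 < y \<bullet> (A *v y)"
    and m0: "0 \<le> m" and k: "k \<ge> 1"
    and gx: "gcon A v x \<le> 1" and gx': "gcon A v x' \<le> 1"
  shows "((Q *v x + q + (m * gcon A v x ^ (k-1)) *\<^sub>R (2 *\<^sub>R (A *v (x - v))))
        - (Q *v x' + q + (m * gcon A v x' ^ (k-1)) *\<^sub>R (2 *\<^sub>R (A *v (x' - v))))) \<bullet> (x - x')
         \<le> Lconst Q A m k * (norm (x - x'))^2"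
proof -
  define u where "u = x - v"
  define u' where "u' = x' - v"
  define d where "d = x - x'"
  define s where "s = u \<bullet> (A *v u)"
  define s' where "s' = u' \<bullet> (A *v u')"
  define t where "t = u' \<bullet> (A *v u)"
  have symA: "\<And>a b. a \<bullet> (A *v b) = b \<bullet> (A *v a)" by (rule sym_dot[OF A_sym])
  have psdA: "\<And>y. 0 \<le> y \<bullet> (A *v y)" by (rule psd_of_pd[OF A_pd])
  have sx: "gcon A v x = s" by (simp add: gcon_def s_def u_def)
  have sx': "gcon A v x' = s'" by (simp add: gcon_def s'_def u'_def)
  have du: "d = u - u'" by (simp add: d_def u_def u'_def)
  have s0: "0 \<le> s" "s \<le> 1" using psdA gx sx s_def by auto
  have s0': "0 \<le> s'" "s' \<le> 1" using psdA gx' sx' s'_def by auto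
  have e1: "((Q *v x + q + (m * gcon A v x ^ (k-1)) *\<^sub>R (2 *\<^sub>R (A *v (x - v))))
        - (Q *v x' + q + (m * gcon A v x' ^ (k-1)) *\<^sub>R (2 *\<^sub>R (A *v (x' - v))))) \<bullet> (x - x')
      = d \<bullet> (Q *v d) + 2 * m * (s^(k-1) * (d \<bullet> (A *v u)) - s'^(k-1) * (d \<bullet> (A *v u')))"
  proof -
    have ev: "(Q *v x + q + (m * gcon A v x ^ (k-1)) *\<^sub>R (2 *\<^sub>R (A *v (x - v))))
        - (Q *v x' + q + (m * gcon A v x' ^ (k-1)) *\<^sub>R (2 *\<^sub>R (A *v (x' - v))))
        = Q *v d + (2 * m * s^(k-1)) *\<^sub>R (A *v u) - (2 * m * s'^(k-1)) *\<^sub>R (A *v u')"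
      unfolding sx sx' u_def[symmetric] u'_def[symmetric]
      by (simp add: d_def matrix_vector_mult_diff_distrib algebra_simps)
    show ?thesis unfolding ev d_def[symmetric]
      by (simp add: inner_diff_left inner_add_left inner_commute[of "Q *v d" d]
          inner_commute[of "A *v u" d] inner_commute[of "A *v u'" d] algebra_simps)
  qed
  have e2: "d \<bullet> (A *v u) = s - t"
    by (simp add: du inner_diff_left s_def t_def)
  have e3: "d \<bullet> (A *v u') = t - s'"
    using symA[of u u'] by (simp add: du inner_diff_left s'_def t_def)
  have e4: "d \<bullet> (A *v d) = s - 2 * t + s'"
    using symA[of u u'] by (simp add: du inner_diff_left inner_diff_right matrix_vector_mult_diff_distrib s_def s'_def t_def)
  have tcs: "t^2 \<le> s' * s" using psd_cs[OF symA psdA, of u' u] by (simp add: s_def s'_def t_def)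
  have tle: "t \<le> sqrt s * sqrt s'"
  proof -
    have "\<bar>t\<bar> \<le> sqrt (s' * s)" using tcs real_sqrt_le_mono[OF tcs] by simp
    then show ?thesis by (simp add: real_sqrt_mult mult.commute)
  qed
  have key: "(sqrt s^2)^(k-1) * (sqrt s^2 - t) - (sqrt s'^2)^(k-1) * (t - sqrt s'^2)
      \<le> (2 * real k - 1) * (sqrt s^2 - 2*t + sqrt s'^2)"
    by (rule scalar_key) (use s0 s0' tle k in auto)
  then have key': "s^(k-1) * (s - t) - s'^(k-1) * (t - s') \<le> (2 * real k - 1) * (s - 2*t + s')"
    using s0 s0' by simp
  have "((Q *v x + q + (m * gcon A v x ^ (k-1)) *\<^sub>R (2 *\<^sub>R (A *v (x - v))))
        - (Q *v x' + q + (m * gcon A v x' ^ (k-1)) *\<^sub>R (2 *\<^sub>R (A *v (x' - v))))) \<bullet> (x - x')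
      = d \<bullet> (Q *v d) + 2 * m * (s^(k-1) * (s - t) - s'^(k-1) * (t - s'))"
    unfolding e1 e2 e3 ..
  also have "\<dots> \<le> d \<bullet> (Q *v d) + 2 * m * ((2 * real k - 1) * (s - 2*t + s'))"
    using key' m0 by (simp add: mult_left_mono)
  also have "\<dots> = d \<bullet> (Q *v d) + (m * (4 * real k - 2)) * (d \<bullet> (A *v d))"
    by (simp add: e4 algebra_simps)
  also have "\<dots> = d \<bullet> ((Q + (m * (4 * real k - 2)) *\<^sub>R A) *v d)"
    by (simp only: comb_mv inner_add_right inner_scaleR_right)
  also have "\<dots> \<le> Lconst Q A m k * (norm d)^2" unfolding Lconst_def by (rule ray)
  finally show ?thesis by (simp add: d_def)
qed


lemma cont_g:
  fixes A :: "real^'n^'n"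
  assumes "transpose A = A"
  shows "isCont (gcon A v) y"
  using has_derivative_continuous[OF gcon_deriv[OF assms]] by simp

lemma cont_D:
  fixes Q A :: "real^'n^'n"
  assumes "transpose A = A"
  shows "isCont (\<lambda>y. Q *v y + q + (m * gcon A v y ^ (k-1)) *\<^sub>R (2 *\<^sub>R (A *v (y - v)))) y"
proof -
  have c1: "isCont (\<lambda>y. Q *v y) y" by (rule linear_continuous_at[OF matrix_vector_mul_bounded_linear])
  have c0: "isCont (\<lambda>y. A *v y) y" by (rule linear_continuous_at[OF matrix_vector_mul_bounded_linear])
  have c2: "isCont (\<lambda>y. A *v (y - v)) y"
    unfolding matrix_vector_mult_diff_distrib by (intro continuous_intros c0)
  have c3: "isCont (gcon A v) y" by (rule cont_g[OF assms])
  have c4: "isCont (\<lambda>y. gcon A v y ^ (k-1)) y" by (intro continuous_intros c3)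
  show ?thesis by (intro continuous_intros c1 c2 c4)
qed

lemma compact_C:
  fixes A :: "real^'n^'n"
  assumes A_sym: "transpose A = A" and A_pd: "\<forall>y. y \<noteq> 0 \<longrightarrow> 0 < y \<bullet> (A *v y)"
  shows "compact {y. gcon A v y \<le> 1}"
proof -
  obtain c0 where c0: "c0 > 0" "\<And>y. c0 * (norm y)^2 \<le> y \<bullet> (A *v y)"
    using pd_lower[OF A_pd] by blast
  have cl: "closed {y. gcon A v y \<le> 1}"
    by (rule closed_Collect_le) (auto intro!: continuous_at_imp_continuous_on cont_g[OF A_sym])
  have "norm y \<le> norm v + 1 + 1 / c0" if "gcon A v y \<le> 1" for y
  proof -
    have "c0 * (norm (y - v))^2 \<le> 1" using c0(2)[of "y - v"] that by (simp add: gcon_def)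
    then have h: "(norm (y - v))^2 \<le> 1 / c0" using c0(1) by (simp add: field_simps)
    have sq: "0 \<le> (norm (y - v) - 1)^2" by simp
    then have "2 * norm (y - v) \<le> 1 + (norm (y - v))^2" by (simp add: power2_eq_square algebra_simps)
    then have "norm (y - v) \<le> 1 + (norm (y - v))^2" using norm_ge_zero[of "y - v"] by linarith
    moreover have "norm y \<le> norm v + norm (y - v)" by (metis add.commute diff_add_cancel norm_triangle_ineq)
    ultimately show ?thesis using h by linarith
  qed
  then have "bounded {y. gcon A v y \<le> 1}"
    unfolding Elementary_Metric_Spaces.bounded_iff by blast
  then show ?thesis using cl by (simp add: compact_eq_bounded_closed)
qed

lemma invariance_strict:
  fixes Q A :: "real^'n^'n" and q v :: "real^'n"
  assumes Q_sym: "transpose Q = Q" and Q_psd: "\<forall>y. 0 \<le> y \<bullet> (Q *v y)"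
    and A_sym: "transpose A = A" and A_pd: "\<forall>y. y \<noteq> 0 \<longrightarrow> 0 < y \<bullet> (A *v y)"
    and m0: "0 \<le> m" and k: "k \<ge> 1"
    and bstep: "\<And>z. gcon A v z = 1 \<Longrightarrow>
        gcon A v (z - \<tau> *\<^sub>R (Q *v z + q + (m * gcon A v z ^ (k-1)) *\<^sub>R (2 *\<^sub>R (A *v (z - v))))) \<le> 1"
    and tau: "0 \<le> \<tau>" "\<tau> * Lconst Q A m k < 1"
    and gx: "gcon A v x \<le> 1"
  shows "gcon A v (x - \<tau> *\<^sub>R (Q *v x + q + (m * gcon A v x ^ (k-1)) *\<^sub>R (2 *\<^sub>R (A *v (x - v))))) \<le> 1"
proof -
  define D where "D y = Q *v y + q + (m * gcon A v y ^ (k-1)) *\<^sub>R (2 *\<^sub>R (A *v (y - v)))" for y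
  define T where "T y = y - \<tau> *\<^sub>R D y" for y
  define C where "C = {y. gcon A v y \<le> 1}"
  define L where "L = Lconst Q A m k"
  define g where "g = gcon A v"
  have g0: "\<And>y. 0 \<le> g y" unfolding g_def by (rule gcon_nonneg[OF A_pd])
  have contg: "\<And>y. isCont g y" unfolding g_def by (rule cont_g[OF A_sym])
  have contT: "\<And>y. isCont T y" unfolding T_def D_def by (intro continuous_intros cont_D[OF A_sym])
  have contgT: "\<And>y. isCont (\<lambda>y. g (T y)) y" by (rule isCont_o2[OF contT contg])
  have compC: "compact C" unfolding C_def by (rule compact_C[OF A_sym A_pd])
  have xC: "x \<in> C" using gx by (simp add: C_def)
  obtain x1 where x1: "x1 \<in> C" "\<And>y. y \<in> C \<Longrightarrow> g (T y) \<le> g (T x1)"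
    using continuous_attains_sup[OF compC _ continuous_at_imp_continuous_on] xC contgT by blast
  have mono: "(D y - D y') \<bullet> (y - y') \<le> L * (norm (y - y'))^2" if "y \<in> C" "y' \<in> C" for y y'
    unfolding D_def L_def
    by (rule mono_grad[OF Q_sym A_sym Q_psd A_pd m0 k]) (use that in \<open>auto simp: C_def\<close>)
  have inj: "inj_on T C"
  proof (rule inj_onI)
    fix y y' assume yC: "y \<in> C" and y'C: "y' \<in> C" and eq: "T y = T y'"
    have "y - y' = \<tau> *\<^sub>R (D y - D y')" using eq by (simp add: T_def algebra_simps)
    then have "(norm (y - y'))^2 = \<tau> * ((D y - D y') \<bullet> (y - y'))"
      by (metis inner_scaleR_left power2_norm_eq_inner)
    also have "\<dots> \<le> \<tau> * (L * (norm (y - y'))^2)" using mono[OF yC y'C] tau(1) by (rule mult_left_mono)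
    finally have "(1 - \<tau> * L) * (norm (y - y'))^2 \<le> 0" by (simp add: algebra_simps)
    moreover have "0 < 1 - \<tau> * L" using tau(2) L_def by simp
    ultimately have "(norm (y - y'))^2 \<le> 0" by (simp add: mult_le_0_iff)
    then show "y = y'" by simp
  qed
  have "g (T x1) \<le> 1"
  proof (cases "g x1 = 1")
    case True
    then show ?thesis using bstep[of x1] by (simp add: g_def T_def D_def)
  next
    case False
    define U where "U = {y. g y < 1}"
    have UC: "U \<subseteq> C" by (auto simp: U_def C_def g_def)
    have x1U: "x1 \<in> U" using False x1(1) by (simp add: U_def C_def g_def)
    have openU: "open U" unfolding U_def
      by (rule open_Collect_less) (auto intro!: continuous_at_imp_continuous_on contg)
    have injU: "inj_on T U" using inj UC by (rule inj_on_subset)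
    have "open (T ` U)"
      by (rule invariance_of_domain[OF continuous_at_imp_continuous_on openU injU]) (use contT in blast)
    moreover have "T x1 \<in> T ` U" using x1U by blast
    ultimately obtain e where e: "e > 0" "ball (T x1) e \<subseteq> T ` U"
      by (meson open_contains_ball)
    define p0 where "p0 = T x1"
    define \<delta> where "\<delta> = e / (2 * (norm (p0 - v) + 1))"
    have dpos: "\<delta> > 0" unfolding \<delta>_def using e(1) by (intro divide_pos_pos) (auto intro: add_nonneg_pos)
    define p where "p = p0 + \<delta> *\<^sub>R (p0 - v)"
    have "dist p0 p = \<delta> * norm (p0 - v)" using dpos by (simp add: p_def dist_norm)
    also have "\<dots> < e"
    proof -
      have "\<delta> * norm (p0 - v) = e * (norm (p0 - v) / (2 * (norm (p0 - v) + 1)))"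
        by (simp add: \<delta>_def)
      also have "\<dots> < e * 1"
      proof (rule mult_strict_left_mono[OF _ e(1)])
        have "0 < 2 * (norm (p0 - v) + 1)" by (simp add: add_nonneg_pos)
        then show "norm (p0 - v) / (2 * (norm (p0 - v) + 1)) < 1" by (simp add: divide_less_eq)
      qed
      finally show ?thesis by simp
    qed
    finally have "p \<in> T ` U" using e(2) p0_def by auto
    then obtain y2 where y2: "y2 \<in> U" "p = T y2" by blast
    have "g p \<le> g p0" using x1(2)[of y2] y2 UC p0_def by auto
    moreover have "g p = (1 + \<delta>)^2 * g p0"
    proof -
      have "p - v = (1 + \<delta>) *\<^sub>R (p0 - v)" by (simp add: p_def algebra_simps)
      then have "g p = ((1 + \<delta>) *\<^sub>R (p0 - v)) \<bullet> (A *v ((1 + \<delta>) *\<^sub>R (p0 - v)))"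
        by (simp only: g_def gcon_def)
      also have "\<dots> = (1 + \<delta>)^2 * ((p0 - v) \<bullet> (A *v (p0 - v)))" by (rule quad_scale)
      finally show ?thesis by (simp add: g_def gcon_def)
    qed
    ultimately have "((1 + \<delta>)^2 - 1) * g p0 \<le> 0" by (simp add: algebra_simps)
    moreover have "(1 + \<delta>)^2 - 1 > 0" using dpos by (simp add: power2_eq_square algebra_simps add_pos_pos)
    ultimately have "g p0 \<le> 0" by (simp add: mult_le_0_iff)
    then show ?thesis using p0_def by simp
  qed
  then have "g (T x) \<le> 1" using x1(2)[OF xC] by simp
  then show ?thesis by (simp add: g_def T_def D_def)
qed


lemma invariance:
  fixes Q A :: "real^'n^'n" and q v x :: "real^'n" and m :: real
  assumes Q_sym: "transpose Q = Q" and Q_psd: "\<forall>y. 0 \<le> y \<bullet> (Q *v y)"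
    and A_sym: "transpose A = A" and A_pd: "\<forall>y. y \<noteq> 0 \<longrightarrow> 0 < y \<bullet> (A *v y)"
    and m_pos: "m > 0"
    and req2: "\<forall>y. gcon A v y = 1 \<longrightarrow>
        (let w = grad (fobj Q q) y + m *\<^sub>R grad (gcon A v) y in
          (norm w)\<^sup>2 * norm (grad (gcon A v) y)
            \<le> 2 * rconst A * Lconst Q A m 1 * (w \<bullet> grad (gcon A v) y))"
    and k: "k \<ge> 1" and gx: "gcon A v x \<le> 1"
    and gam: "0 < \<gamma>" "\<gamma> \<le> 1 / Lconst Q A m k"
  shows "gcon A v (x - \<gamma> *\<^sub>R grad (Jpen Q q A v m k) x) \<le> 1"
proof -
  define L where "L = Lconst Q A m k"
  define L1 where "L1 = Lconst Q A m 1"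
  define D where "D y = Q *v y + q + (m * gcon A v y ^ (k-1)) *\<^sub>R (2 *\<^sub>R (A *v (y - v)))" for y
  have Lpos: "0 < L" using gam L_def by (metis less_le_trans zero_less_divide_1_iff)
  have symQ: "\<And>a b. a \<bullet> (Q *v b) = b \<bullet> (Q *v a)" by (rule sym_dot[OF Q_sym])
  have symA: "\<And>a b. a \<bullet> (A *v b) = b \<bullet> (A *v a)" by (rule sym_dot[OF A_sym])
  have psdA: "\<And>y. 0 \<le> y \<bullet> (A *v y)" by (rule psd_of_pd[OF A_pd])
  have L1L: "L1 \<le> L"
    unfolding L1_def L_def Lconst_def
  proof (rule sv_max_mono)
    fix a b :: "real^'n"
    show "a \<bullet> ((Q + (m * (4 * real 1 - 2)) *\<^sub>R A) *v b) = b \<bullet> ((Q + (m * (4 * real 1 - 2)) *\<^sub>R A) *v a)"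
      by (simp only: comb_mv inner_add_right inner_scaleR_right symQ[of a b] symA[of a b])
  next
    fix y :: "real^'n"
    show "0 \<le> y \<bullet> ((Q + (m * (4 * real 1 - 2)) *\<^sub>R A) *v y)"
      using Q_psd psdA[of y] m_pos by (simp add: comb_mv inner_add_right)
    have "m * (4 * real 1 - 2) \<le> m * (4 * real k - 2)" using k m_pos by simp
    then have "(m * (4 * real 1 - 2)) * (y \<bullet> (A *v y)) \<le> (m * (4 * real k - 2)) * (y \<bullet> (A *v y))"
      using psdA[of y] by (rule mult_right_mono)
    then show "y \<bullet> ((Q + (m * (4 * real 1 - 2)) *\<^sub>R A) *v y) \<le> y \<bullet> ((Q + (m * (4 * real k - 2)) *\<^sub>R A) *v y)"
      by (simp only: comb_mv inner_add_right inner_scaleR_right)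
  qed
  have L10: "0 \<le> L1" unfolding L1_def Lconst_def by (rule sv_max_nonneg)
  have bst: "gcon A v (z - \<tau> *\<^sub>R D z) \<le> 1" if t0: "0 \<le> \<tau>" and tL: "\<tau> * L \<le> 1" and gz: "gcon A v z = 1" for \<tau> z
  proof -
    define w where "w = Q *v z + q + m *\<^sub>R (2 *\<^sub>R (A *v (z - v)))"
    have "(norm w)\<^sup>2 * norm (2 *\<^sub>R (A *v (z - v))) \<le> 2 * rconst A * L1 * (w \<bullet> (2 *\<^sub>R (A *v (z - v))))"
      using req2[rule_format, OF gz] unfolding L1_def w_def by (simp add: Let_def grad_f[OF Q_sym] grad_g[OF A_sym] mult_ac)
    moreover have "\<tau> * L1 \<le> 1" using L1L t0 tL by (meson mult_left_mono order_trans)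
    ultimately have "gcon A v (z - \<tau> *\<^sub>R w) \<le> 1"
      using boundary_step[OF A_sym gz _ L10 t0] by blast
    moreover have "D z = w" using gz by (simp add: D_def w_def)
    ultimately show ?thesis by simp
  qed
  have strict: "gcon A v (x - \<tau> *\<^sub>R D x) \<le> 1" if t0: "0 \<le> \<tau>" and tL: "\<tau> * L < 1" for \<tau>
    unfolding D_def
  proof (rule invariance_strict[OF Q_sym Q_psd A_sym A_pd _ k])
    show "0 \<le> m" using m_pos by simp
    show "0 \<le> \<tau>" by (rule t0)
    show "\<tau> * Lconst Q A m k < 1" using tL L_def by simp
    show "gcon A v x \<le> 1" by (rule gx)
    fix z assume "gcon A v z = 1"
    then show "gcon A v (z - \<tau> *\<^sub>R (Q *v z + q + (m * gcon A v z ^ (k - 1)) *\<^sub>R 2 *\<^sub>R (A *v (z - v)))) \<le> 1"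
      using bst[OF t0 _] tL by (simp add: D_def)
  qed
  have gL: "\<gamma> * L \<le> 1" using gam Lpos L_def by (simp add: field_simps)
  have main: "gcon A v (x - \<gamma> *\<^sub>R D x) \<le> 1"
  proof (cases "\<gamma> * L < 1")
    case True then show ?thesis using strict gam by simp
  next
    case False
    then have gL1: "\<gamma> * L = 1" using gL by simp
    define \<phi> where "\<phi> n = \<gamma> * (1 - inverse (real (Suc n)) / 2)" for n
    have phi: "0 \<le> \<phi> n \<and> \<phi> n * L < 1" for n
    proof -
      have i0: "0 < inverse (real (Suc n))" by simp
      have i1: "inverse (real (Suc n)) \<le> 1" by (simp add: inverse_le_1_iff)
      have "0 \<le> \<phi> n" unfolding \<phi>_def using gam i1 by simp
      moreover have "\<phi> n * L = 1 - inverse (real (Suc n)) / 2"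
        unfolding \<phi>_def using gL1 by (simp add: algebra_simps)
      ultimately show ?thesis using i0 by simp
    qed
    have lim\<phi>: "\<phi> \<longlonglongrightarrow> \<gamma> * (1 - 0 / 2)"
      unfolding \<phi>_def by (intro tendsto_intros LIMSEQ_inverse_real_of_nat) simp
    have limx: "(\<lambda>n. x - \<phi> n *\<^sub>R D x) \<longlonglongrightarrow> x - (\<gamma> * (1 - 0 / 2)) *\<^sub>R D x"
      by (intro tendsto_intros lim\<phi>)
    have limg: "(\<lambda>n. gcon A v (x - \<phi> n *\<^sub>R D x)) \<longlonglongrightarrow> gcon A v (x - \<gamma> *\<^sub>R D x)"
      using isCont_tendsto_compose[OF cont_g[OF A_sym] limx] by simp
    show ?thesis
      by (rule LIMSEQ_le_const2[OF limg]) (use strict phi in blast)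
  qed
  then show ?thesis using grad_J[OF Q_sym A_sym k] by (simp add: D_def)
qed

lemma grad_bound:
  fixes Q A :: "real^'n^'n" and q v :: "real^'n" and m :: real
  assumes A_pd: "\<forall>y. y \<noteq> 0 \<longrightarrow> 0 < y \<bullet> (A *v y)" and m0: "0 \<le> m"
  shows "\<exists>B. \<forall>k y. gcon A v y \<le> 1 \<longrightarrow>
      norm (Q *v y + q + (m * gcon A v y ^ (k-1)) *\<^sub>R (2 *\<^sub>R (A *v (y - v)))) \<le> B"
proof -
  obtain c0 where c0: "c0 > 0" "\<And>y. c0 * (norm y)^2 \<le> y \<bullet> (A *v y)"
    using pd_lower[OF A_pd] by blast
  define R where "R = 1 + 1 / c0"
  have R: "norm (y - v) \<le> R" if "gcon A v y \<le> 1" for y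
  proof -
    have "c0 * (norm (y - v))^2 \<le> 1" using c0(2)[of "y - v"] that by (simp add: gcon_def)
    then have h: "(norm (y - v))^2 \<le> 1 / c0" using c0(1) by (simp add: field_simps)
    have sq: "0 \<le> (norm (y - v) - 1)^2" by simp
    then have "2 * norm (y - v) \<le> 1 + (norm (y - v))^2" by (simp add: power2_eq_square algebra_simps)
    then show ?thesis using norm_ge_zero[of "y - v"] h R_def by linarith
  qed
  define B where "B = sv_max Q * (norm v + R) + norm q + m * (2 * (sv_max A * R))"
  have "norm (Q *v y + q + (m * gcon A v y ^ (k-1)) *\<^sub>R (2 *\<^sub>R (A *v (y - v)))) \<le> B"
    if gy: "gcon A v y \<le> 1" for k y
  proof -
    have g0: "0 \<le> gcon A v y" by (rule gcon_nonneg[OF A_pd])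
    have gp: "0 \<le> gcon A v y ^ (k-1)" "gcon A v y ^ (k-1) \<le> 1" using g0 gy by (auto simp: power_le_one)
    have ny: "norm y \<le> norm v + R" using R[OF gy] by (metis add.commute add_left_mono diff_add_cancel norm_triangle_ineq order_trans)
    have n1: "norm (Q *v y) \<le> sv_max Q * (norm v + R)"
      using mv_norm[of Q y] ny sv_max_nonneg[of Q] by (meson mult_left_mono order_trans)
    have n2: "norm (A *v (y - v)) \<le> sv_max A * R"
      using mv_norm[of A "y - v"] R[OF gy] sv_max_nonneg[of A] by (meson mult_left_mono order_trans)
    have n3: "norm ((m * gcon A v y ^ (k-1)) *\<^sub>R (2 *\<^sub>R (A *v (y - v)))) \<le> m * (2 * (sv_max A * R))"
    proof -
      have "norm ((m * gcon A v y ^ (k-1)) *\<^sub>R (2 *\<^sub>R (A *v (y - v))))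
          = (m * gcon A v y ^ (k-1)) * (2 * norm (A *v (y - v)))"
        using m0 gp by simp
      also have "\<dots> \<le> m * (2 * norm (A *v (y - v)))"
        using m0 gp by (intro mult_right_mono) (auto intro: mult_left_le)
      also have "\<dots> \<le> m * (2 * (sv_max A * R))" using n2 m0 by (intro mult_left_mono) auto
      finally show ?thesis .
    qed
    have "norm (Q *v y + q + (m * gcon A v y ^ (k-1)) *\<^sub>R (2 *\<^sub>R (A *v (y - v))))
        \<le> norm (Q *v y) + norm q + norm ((m * gcon A v y ^ (k-1)) *\<^sub>R (2 *\<^sub>R (A *v (y - v))))"
      by (meson add_mono norm_triangle_ineq order_trans order_refl)
    then show ?thesis using n1 n3 B_def by linarith
  qed
  then show ?thesis by blast
qed

theorem lemma5:
  fixes Q A :: "real^'n^'n" and q v :: "real^'n" and m :: real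
    and x :: "nat \<Rightarrow> real^'n" and \<gamma> :: "nat \<Rightarrow> real"
  assumes Q_sym: "transpose Q = Q"
    and Q_psd: "\<forall>y. 0 \<le> y \<bullet> (Q *v y)"
    and A_sym: "transpose A = A"
    and A_pd: "\<forall>y. y \<noteq> 0 \<longrightarrow> 0 < y \<bullet> (A *v y)"
    and m_pos: "m > 0"
    and req2: "\<forall>y. gcon A v y = 1 \<longrightarrow>
        (let w = grad (fobj Q q) y + m *\<^sub>R grad (gcon A v) y in
          (norm w)\<^sup>2 * norm (grad (gcon A v) y)
            \<le> 2 * rconst A * Lconst Q A m 1 * (w \<bullet> grad (gcon A v) y))"
    and x1: "gcon A v (x 1) \<le> 1"
    and iter: "\<forall>k\<ge>1. x (Suc k) = x k - \<gamma> k *\<^sub>R grad (Jpen Q q A v m k) (x k)"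
    and step: "\<forall>k\<ge>1. 0 < \<gamma> k \<and> \<gamma> k \<le> 1 / Lconst Q A m k"
    and sq_summable: "summable (\<lambda>k. (\<gamma> k)\<^sup>2)"
    and not_summable: "\<not> summable \<gamma>"
  shows "summable (\<lambda>k. (\<gamma> (Suc k))\<^sup>2 * (norm (grad (Jpen Q q A v m (Suc k)) (x (Suc k))))\<^sup>2)"
proof -
  have inC: "gcon A v (x k) \<le> 1" if "k \<ge> 1" for k
    using that
  proof (induction k rule: nat_induct_at_least)
    case base then show ?case by (rule x1)
  next
    case (Suc n)
    have "x (Suc n) = x n - \<gamma> n *\<^sub>R grad (Jpen Q q A v m n) (x n)" using iter Suc.hyps by blast
    moreover have "gcon A v (x n - \<gamma> n *\<^sub>R grad (Jpen Q q A v m n) (x n)) \<le> 1"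
      by (rule invariance[OF Q_sym Q_psd A_sym A_pd m_pos req2 Suc.hyps Suc.IH])
        (simp_all add: step[rule_format, OF Suc.hyps])
    ultimately show ?case by simp
  qed
  obtain B where B: "\<And>k y. gcon A v y \<le> 1 \<Longrightarrow>
      norm (Q *v y + q + (m * gcon A v y ^ (k-1)) *\<^sub>R (2 *\<^sub>R (A *v (y - v)))) \<le> B"
    using grad_bound[OF A_pd, where m=m and Q=Q and q=q and v=v] m_pos by (meson less_imp_le)
  have gb: "norm (grad (Jpen Q q A v m (Suc k)) (x (Suc k))) \<le> B" for k
  proof -
    have "grad (Jpen Q q A v m (Suc k)) (x (Suc k)) = Q *v x (Suc k) + q
        + (m * gcon A v (x (Suc k)) ^ (Suc k - 1)) *\<^sub>R (2 *\<^sub>R (A *v (x (Suc k) - v)))"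
      by (rule grad_J[OF Q_sym A_sym]) simp
    then show ?thesis using B[OF inC[of "Suc k"], of "Suc k"] by simp
  qed
  have B0: "0 \<le> B" by (rule order_trans[OF norm_ge_zero gb])
  have sum1: "summable (\<lambda>k. B^2 * (\<gamma> (Suc k))\<^sup>2)"
    by (rule summable_mult) (use summable_Suc_iff[of "\<lambda>n. (\<gamma> n)\<^sup>2"] sq_summable in simp)
  show ?thesis
  proof (rule summable_comparison_test[OF _ sum1])
    show "\<exists>N. \<forall>n\<ge>N. norm ((\<gamma> (Suc n))\<^sup>2 * (norm (grad (Jpen Q q A v m (Suc n)) (x (Suc n))))\<^sup>2)
        \<le> B^2 * (\<gamma> (Suc n))\<^sup>2"
    proof (intro exI allI impI)
      fix n :: nat
      have "(norm (grad (Jpen Q q A v m (Suc n)) (x (Suc n))))\<^sup>2 \<le> B^2"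
        using gb[of n] by (simp add: power_mono)
      then have "(\<gamma> (Suc n))\<^sup>2 * (norm (grad (Jpen Q q A v m (Suc n)) (x (Suc n))))\<^sup>2 \<le> (\<gamma> (Suc n))\<^sup>2 * B^2"
        by (rule mult_left_mono) simp
      then show "norm ((\<gamma> (Suc n))\<^sup>2 * (norm (grad (Jpen Q q A v m (Suc n)) (x (Suc n))))\<^sup>2)
        \<le> B^2 * (\<gamma> (Suc n))\<^sup>2" by (simp add: mult.commute)
    qed
  qed
qed

end
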